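(* For any $\Delta, k \in \mathbb{N}$ and $\xi > 0$ there exist $\beta > 0$ and $n_0 \in \mathbb{N}$ such that the following holds. Let $H$ be a bipartite graph on $n \geq n_0$ vertices with bandwidth at most $\beta n$ and $\Delta(H) \leq \Delta$. Let $n_1, n_2, \dots, n_{2k}$ be an integer partition of $n$ such that $n_i > n/(3k)$ for all $1 \leq i \leq 2k$ and $|n_{2i-1} - n_{2i}| \ll \xi n$ for all $1 \leq i \leq k$. Let $C$ be the cycle $1 2 \dots (2k) 1$ on vertex set $[2k]$ and let $c = \{2i_1, 2i_2\}$ be a chord of $C$ for some distinct $1 \leq i_1, i_2 \leq k$. Then there exist a set $S \subseteq V(H)$ and a graph homomorphism $f : H \to C \cup \{c\}$ such that: ($\beta_1$) $|S| \leq \xi n$; ($\beta_2$) $|f^{-1}(i)| \leq n_i + \xi n$ for all $1 \leq i \leq 2k$; ($\beta_3$) every edge of $H$ not in $H[S]$ is mapped to an edge $\{2i-1, 2i\}$ for some $1 \leq i \leq k$.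
   Context: The hypothesis $|n_{2i-1} - n_{2i}| \ll \xi n$ means $|n_{2i-1}-n_{2i}| \leq \lambda n$ for a constant $\lambda>0$ chosen sufficiently small relative to $\xi$. A graph $H$ on $n$ vertices has bandwidth at most $b$ if there is a labelling of its vertices by $1,\dots,n$ such that $|i-j| \leq b$ for every edge $ij$. $C \cup \{c\}$ denotes the graph obtained from the cycle $C$ by adding the edge $c$; a graph homomorphism maps edges to edges. *)

theory Defs
  imports Complex_Main
begin

definition simple_graph :: "'a set \<Rightarrow> 'a set set \<Rightarrow> bool" where
  "simple_graph V E \<longleftrightarrow> finite V \<and>
     (\<forall>e\<in>E. \<exists>u v. e = {u, v} \<and> u \<noteq> v \<and> u \<in> V \<and> v \<in> V)"

definition bipartite :: "'a set \<Rightarrow> 'a set set \<Rightarrow> bool" where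
  "bipartite V E \<longleftrightarrow> (\<exists>A B. A \<union> B = V \<and> A \<inter> B = {} \<and>
     (\<forall>u v. {u, v} \<in> E \<longrightarrow> (u \<in> A \<longleftrightarrow> v \<in> B)))"

definition max_degree_le :: "'a set \<Rightarrow> 'a set set \<Rightarrow> nat \<Rightarrow> bool" where
  "max_degree_le V E D \<longleftrightarrow> (\<forall>v\<in>V. card {u. {u, v} \<in> E} \<le> D)"

definition bandwidth_le :: "'a set \<Rightarrow> 'a set set \<Rightarrow> real \<Rightarrow> bool" where
  "bandwidth_le V E b \<longleftrightarrow> (\<exists>\<phi>. bij_betw \<phi> V {1..card V} \<and>
     (\<forall>u v. {u, v} \<in> E \<longrightarrow> \<bar>real (\<phi> u) - real (\<phi> v)\<bar> \<le> b))"

definition cycle_chord_edges :: "nat \<Rightarrow> nat \<Rightarrow> nat \<Rightarrow> nat set set" where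
  "cycle_chord_edges k i1 i2 =
     {{i, i + 1} | i. 1 \<le> i \<and> i < 2 * k} \<union> {{2 * k, 1}} \<union> {{2 * i1, 2 * i2}}"

definition graph_hom :: "'a set \<Rightarrow> 'a set set \<Rightarrow> nat \<Rightarrow> nat set set \<Rightarrow> ('a \<Rightarrow> nat) \<Rightarrow> bool" where
  "graph_hom V E m F f \<longleftrightarrow> (\<forall>v\<in>V. f v \<in> {1..m}) \<and>
     (\<forall>u v. {u, v} \<in> E \<longrightarrow> {f u, f v} \<in> F)"

end

theory Submission
  imports Defs
begin


definition validst :: "nat \<Rightarrow> nat set set \<Rightarrow> nat \<times> nat \<Rightarrow> bool" where
  "validst k F s \<longleftrightarrow> fst s \<in> {1..2*k} \<and> snd s \<in> {1..2*k} \<and> {fst s, snd s} \<in> F"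

definition Rel :: "nat \<Rightarrow> nat set set \<Rightarrow> ((nat \<times> nat) \<times> (nat \<times> nat)) set" where
  "Rel k F = {(s,s'). validst k F s \<and> validst k F s' \<and> {fst s, snd s'} \<in> F \<and> {snd s, fst s'} \<in> F}"

definition pst :: "nat \<Rightarrow> bool \<Rightarrow> nat \<times> nat" where
  "pst i b = (if b then (2*i-1, 2*i) else (2*i, 2*i-1))"

lemma cce_path: "1 \<le> a \<Longrightarrow> a < 2*k \<Longrightarrow> {a, a+1} \<in> cycle_chord_edges k i1 i2"
  unfolding cycle_chord_edges_def by blast

lemma cce_path': "1 \<le> a \<Longrightarrow> a < 2*k \<Longrightarrow> {a+1, a} \<in> cycle_chord_edges k i1 i2"
  using cce_path by (metis insert_commute)

lemma cce_chord: "{2*i1, 2*i2} \<in> cycle_chord_edges k i1 i2"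
  unfolding cycle_chord_edges_def by blast

lemma Rel_sym: "sym (Rel k F)"
  unfolding sym_def Rel_def by (auto simp: insert_commute)

lemma Rel_refl: "validst k F s \<Longrightarrow> (s,s) \<in> Rel k F"
  unfolding Rel_def validst_def by (auto simp: insert_commute)

lemma Rel_finite: "Rel k F \<subseteq> ({1..2*k} \<times> {1..2*k}) \<times> ({1..2*k} \<times> {1..2*k})"
  unfolding Rel_def validst_def by auto

lemma Rel_card: "card (Rel k F) \<le> (2*k)^4"
proof -
  have "card (Rel k F) \<le> card (({1..2*k} \<times> {1..2*k}) \<times> ({1..2*k} \<times> {1..2*k}))"
    by (rule card_mono[OF _ Rel_finite]) auto
  also have "\<dots> = (2*k)^4" by (simp add: card_cartesian_product power4_eq_xxxx)
  finally show ?thesis .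
qed

lemma step2:
  fixes k i1 i2 :: nat and F defines "F \<equiv> cycle_chord_edges k i1 i2"
  assumes "1 \<le> x" "x + 3 \<le> 2*k"
  shows "((x,x+1),(x+2,x+3)) \<in> (Rel k F)\<^sup>*" "((x+1,x),(x+3,x+2)) \<in> (Rel k F)\<^sup>*"
proof -
  have e1: "{x,x+1} \<in> F" "{x+1,x} \<in> F" using assms cce_path cce_path' by auto
  have e2: "{x+1,x+2} \<in> F" "{x+2,x+1} \<in> F" using assms cce_path[of "x+1" k] cce_path'[of "x+1" k]
    unfolding F_def by (auto simp: add.assoc)
  have e3: "{x+2,x+3} \<in> F" "{x+3,x+2} \<in> F" using assms cce_path[of "x+2" k] cce_path'[of "x+2" k]
    unfolding F_def by (auto simp: add.assoc numeral_3_eq_3)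
  have "((x,x+1),(x+2,x+1)) \<in> Rel k F" "((x+2,x+1),(x+2,x+3)) \<in> Rel k F"
    using e1 e2 e3 assms unfolding Rel_def validst_def by auto
  then show "((x,x+1),(x+2,x+3)) \<in> (Rel k F)\<^sup>*" by (meson rtrancl.simps)
  have "((x+1,x),(x+1,x+2)) \<in> Rel k F" "((x+1,x+2),(x+3,x+2)) \<in> Rel k F"
    using e1 e2 e3 assms unfolding Rel_def validst_def by auto
  then show "((x+1,x),(x+3,x+2)) \<in> (Rel k F)\<^sup>*" by (meson rtrancl.simps)
qed

lemma chainO1:
  fixes k i1 i2 :: nat and F defines "F \<equiv> cycle_chord_edges k i1 i2"
  shows "1 \<le> i \<Longrightarrow> i \<le> k \<Longrightarrow> ((1,2), pst i True) \<in> (Rel k F)\<^sup>* \<and> ((2,1), pst i False) \<in> (Rel k F)\<^sup>*"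
proof (induction i rule: nat_induct_at_least)
  case base
  then show ?case by (simp add: pst_def)
next
  case (Suc i)
  have "((2*i-1,2*i-1+1),(2*i-1+2,2*i-1+3)) \<in> (Rel k F)\<^sup>*" "((2*i-1+1,2*i-1),(2*i-1+3,2*i-1+2)) \<in> (Rel k F)\<^sup>*"
    using step2[of "2*i-1" k i1 i2] Suc unfolding F_def by auto
  moreover have "(2*i-1,2*i-1+1) = pst i True" "(2*i-1+2,2*i-1+3) = pst (Suc i) True"
    "(2*i-1+1,2*i-1) = pst i False" "(2*i-1+3,2*i-1+2) = pst (Suc i) False"
    using Suc by (auto simp: pst_def)
  ultimately show ?case using Suc by (metis Suc_leD rtrancl_trans)
qed

lemma chainE:
  fixes k i1 i2 :: nat and F defines "F \<equiv> cycle_chord_edges k i1 i2"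
  assumes "1 \<le> a"
  shows "2*a + 2*m + 1 \<le> 2*k \<Longrightarrow> ((2*a,2*a+1),(2*a+2*m,2*a+2*m+1)) \<in> (Rel k F)\<^sup>*"
proof (induction m)
  case 0
  then show ?case by simp
next
  case (Suc m)
  have "((2*a+2*m,2*a+2*m+1),(2*a+2*m+2,2*a+2*m+3)) \<in> (Rel k F)\<^sup>*"
    using step2(1)[of "2*a+2*m" k i1 i2] Suc assms unfolding F_def by auto
  moreover have "((2*a,2*a+1),(2*a+2*m,2*a+2*m+1)) \<in> (Rel k F)\<^sup>*" using Suc by simp
  moreover have "(2*a+2*Suc m, 2*a+2*Suc m+1) = (2*a+2*m+2, 2*a+2*m+3)" by simp
  ultimately show ?case by (metis rtrancl_trans)
qed


lemma flip:
  fixes k i1 i2 :: nat and F defines "F \<equiv> cycle_chord_edges k i1 i2"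
  assumes "1 \<le> a" "a < b" "b \<le> k" "{2*a, 2*b} \<in> F"
  shows "(pst a True, pst a False) \<in> (Rel k F)\<^sup>*"
proof -
  define x where "x = 2*b-2"
  define y where "y = 2*a-1"
  have xb: "2*b-1 = x+1" "2*b = x+2" "x+2 \<le> 2*k" "1 \<le> x" using assms unfolding x_def by auto
  have ya: "2*a = y+1" "2*a+1 = y+2" "y+2 \<le> 2*k" "1 \<le> y" "2*a-1 = y" using assms unfolding y_def by auto
  have c1: "((2*a,2*a+1),(2*a+2*(b-a-1),2*a+2*(b-a-1)+1)) \<in> (Rel k F)\<^sup>*"
    using chainE[of a "b-a-1" k i1 i2] assms unfolding F_def by auto
  have eq: "2*a+2*(b-a-1) = x" "2*a+2*(b-a-1)+1 = x+1" using assms unfolding x_def by auto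
  have p1: "{x, x+1} \<in> F" "{x+1, x+2} \<in> F" "{x+1, x} \<in> F" "{x+2, x+1} \<in> F"
    using cce_path[of "x" k i1 i2] cce_path'[of "x" k i1 i2]
       cce_path[of "x+1" k i1 i2] cce_path'[of "x+1" k i1 i2] xb unfolding F_def
    by (simp_all add: add.assoc)
  have p2: "{y+1, y+2} \<in> F" "{y+2, y+1} \<in> F" "{y, y+1} \<in> F" "{y+1, y} \<in> F"
    using cce_path[of "y+1" k i1 i2] cce_path'[of "y+1" k i1 i2]
       cce_path[of "y" k i1 i2] cce_path'[of "y" k i1 i2] ya unfolding F_def
    by (simp_all add: add.assoc)
  have e: "{x+2, y+1} = {2*a, 2*b}" using xb(2) ya(1) by (simp add: insert_commute)
  have ch: "{x+2, y+1} \<in> F" unfolding e using assms(5) by simp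
  have r1: "((x, x+1), (x+2, x+1)) \<in> Rel k F"
    using p1 xb unfolding Rel_def validst_def by simp
  have r2: "((x+2, x+1), (x+2, y+1)) \<in> Rel k F"
    using p1 ch xb ya unfolding Rel_def validst_def by simp
  have r3: "((x+2, y+1), (y+2, y+1)) \<in> Rel k F"
    using p2 ch xb ya unfolding Rel_def validst_def by simp
  have r4: "(pst a True, (y+2, y+1)) \<in> Rel k F"
    using p2 ya unfolding Rel_def validst_def pst_def by simp
  have r5: "(pst a False, (y+1, y+2)) \<in> Rel k F"
    using p2 ya unfolding Rel_def validst_def pst_def by simp
  have sy: "sym ((Rel k F)\<^sup>*)" by (rule sym_rtrancl[OF Rel_sym])
  have q1: "(2*a,2*a+1) = (y+1,y+2)" using ya by simp
  have q2: "(2*a+2*(b-a-1),2*a+2*(b-a-1)+1) = (x,x+1)" using eq by simp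
  have c1': "((y+1,y+2),(x, x+1)) \<in> (Rel k F)\<^sup>*" using c1 unfolding q1 q2 .
  have "((y+1,y+2),(y+2, y+1)) \<in> (Rel k F)\<^sup>*"
    using c1' r1 r2 r3 by (meson rtrancl.rtrancl_into_rtrancl)
  then have "((y+2, y+1),(y+1,y+2)) \<in> (Rel k F)\<^sup>*" using sy by (meson symD)
  moreover have "((y+1,y+2), pst a False) \<in> (Rel k F)\<^sup>*" using r5 Rel_sym
    by (meson r_into_rtrancl symD)
  ultimately show ?thesis using r4 by (meson rtrancl_trans r_into_rtrancl)
qed

lemma conn:
  fixes k i1 i2 :: nat and F defines "F \<equiv> cycle_chord_edges k i1 i2"
  assumes "i1 \<in> {1..k}" "i2 \<in> {1..k}" "i1 \<noteq> i2" "i \<in> {1..k}" "i' \<in> {1..k}"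
  shows "(pst i c, pst i' c') \<in> (Rel k F)\<^sup>*"
proof -
  define a where "a = min i1 i2"
  define b where "b = max i1 i2"
  have ab: "1 \<le> a" "a < b" "b \<le> k" "{2*a, 2*b} \<in> F"
    using assms cce_chord[of i1 i2 k] unfolding a_def b_def F_def
    by (auto simp: min_def max_def insert_commute)
  have fl: "(pst a True, pst a False) \<in> (Rel k F)\<^sup>*" using flip[OF ab[unfolded F_def]] F_def by simp
  have sy: "sym ((Rel k F)\<^sup>*)" by (rule sym_rtrancl[OF Rel_sym])
  have all: "((1,2), pst j d) \<in> (Rel k F)\<^sup>*" if "j \<in> {1..k}" for j d
  proof (cases d)
    case True
    then show ?thesis using chainO1[of j k i1 i2] that F_def by auto
  next
    case False
    have "((1,2), pst a True) \<in> (Rel k F)\<^sup>*" using chainO1[of a k i1 i2] ab F_def by auto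
    then have 1: "((1,2), pst a False) \<in> (Rel k F)\<^sup>*" using fl by (meson rtrancl_trans)
    have "((2,1), pst a False) \<in> (Rel k F)\<^sup>*" using chainO1[of a k i1 i2] ab F_def by auto
    then have "(pst a False, (2,1)) \<in> (Rel k F)\<^sup>*" using sy by (meson symD)
    moreover have "((2,1), pst j False) \<in> (Rel k F)\<^sup>*" using chainO1[of j k i1 i2] that F_def by auto
    ultimately have "((1,2), pst j False) \<in> (Rel k F)\<^sup>*" using 1 by (meson rtrancl_trans)
    then show ?thesis using False by simp
  qed
  show ?thesis using all[of i c] all[of i' c'] assms sy by (meson symD rtrancl_trans)
qed

lemma pst_valid: "i \<in> {1..k} \<Longrightarrow> validst k (cycle_chord_edges k i1 i2) (pst i c)"
  using cce_path[of "2*i-1" k i1 i2] cce_path'[of "2*i-1" k i1 i2]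
  unfolding validst_def pst_def by auto

lemma relpow_refl: "validst k F s \<Longrightarrow> (s,s) \<in> (Rel k F)^^j"
  by (induction j) (auto intro: Rel_refl)

lemma walk_exists:
  fixes k i1 i2 :: nat and F defines "F \<equiv> cycle_chord_edges k i1 i2"
  assumes "i1 \<in> {1..k}" "i2 \<in> {1..k}" "i1 \<noteq> i2" "i \<in> {1..k}" "i' \<in> {1..k}"
  shows "\<exists>f. f 0 = pst i c \<and> f ((2*k)^4) = pst i' c' \<and> (\<forall>r<(2*k)^4. (f r, f (Suc r)) \<in> Rel k F)"
proof -
  have fin: "finite (Rel k F)"
    by (rule finite_subset[OF Rel_finite]) auto
  have "(pst i c, pst i' c') \<in> (Rel k F)\<^sup>*" using conn assms by blast
  then obtain m where m: "m \<le> card (Rel k F)" "(pst i c, pst i' c') \<in> (Rel k F)^^m"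
    using rtrancl_finite_eq_relpow[OF fin] by blast
  have mK: "m \<le> (2*k)^4" using m(1) Rel_card[of k F] by linarith
  have "(pst i' c', pst i' c') \<in> (Rel k F)^^((2*k)^4 - m)"
    using relpow_refl pst_valid assms unfolding F_def by blast
  then have "(pst i c, pst i' c') \<in> (Rel k F)^^(m + ((2*k)^4 - m))"
    using m(2) relpow_add by blast
  then have "(pst i c, pst i' c') \<in> (Rel k F)^^((2*k)^4)" using mK by simp
  then show ?thesis unfolding relpow_fun_conv .
qed



lemma ivt_int:
  fixes h :: "nat \<Rightarrow> int"
  assumes "\<forall>t<m. \<bar>h (Suc t) - h t\<bar> \<le> D" "h 0 \<le> 0" "0 \<le> h m" "0 \<le> D"
  shows "\<exists>t\<le>m. \<bar>h t\<bar> \<le> D"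
proof -
  define t where "t = (LEAST t. 0 \<le> h t)"
  have t1: "0 \<le> h t" unfolding t_def by (rule LeastI[of _ m]) (rule assms(3))
  have t2: "t \<le> m" unfolding t_def by (rule Least_le) (rule assms(3))
  show ?thesis
  proof (cases t)
    case 0
    then show ?thesis using t1 assms(2,4) t2 by (intro exI[of _ t]) auto
  next
    case (Suc s)
    have "\<not> 0 \<le> h s" using not_less_Least[of s "\<lambda>t. 0 \<le> h t"] Suc unfolding t_def by auto
    moreover have "\<bar>h t - h s\<bar> \<le> D" using assms(1) Suc t2 by auto
    ultimately show ?thesis using t1 t2 by (intro exI[of _ t]) auto
  qed
qed

lemma ivt_sym:
  fixes h :: "nat \<Rightarrow> int"
  assumes "\<forall>t<m. \<bar>h (Suc t) - h t\<bar> \<le> D" "h m = - h 0" "0 \<le> D"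
  shows "\<exists>t\<le>m. \<bar>h t\<bar> \<le> D"
proof (cases "h 0 \<le> 0")
  case True
  then show ?thesis using ivt_int[of m h D] assms by auto
next
  case False
  have "\<exists>t\<le>m. \<bar>(- h) t\<bar> \<le> D"
    using ivt_int[of m "\<lambda>t. - h t" D] assms False by (auto simp: abs_minus_commute)
  then show ?thesis by auto
qed

lemma sum_if_pm:
  assumes "finite A"
  shows "(\<Sum>v\<in>A. if P v then (1::int) else -1) = int (card {v\<in>A. P v}) - int (card {v\<in>A. \<not> P v})"
proof -
  have "(\<Sum>v\<in>A. if P v then (1::int) else -1) = (\<Sum>v\<in>A \<inter> {x. P x}. 1) + (\<Sum>v\<in>A \<inter> - {x. P x}. -1)"
    by (rule sum.If_cases[OF assms])
  also have "\<dots> = int (card (A \<inter> {x. P x})) - int (card (A \<inter> - {x. P x}))" by simp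
  also have "A \<inter> {x. P x} = {v\<in>A. P v}" by auto
  also have "A \<inter> - {x. P x} = {v\<in>A. \<not> P v}" by auto
  finally show ?thesis .
qed

lemma card_interval_inj:
  assumes "inj_on \<phi> X" "\<phi> ` X \<subseteq> {a..<b}"
  shows "card X \<le> b - a"
proof -
  have "card X = card (\<phi> ` X)" using card_image[OF assms(1)] by simp
  also have "\<dots> \<le> card {a..<b}" by (rule card_mono[OF _ assms(2)]) simp
  finally show ?thesis by simp
qed

lemma sum_pairs: fixes k :: nat and nn :: "nat \<Rightarrow> nat" shows "(\<Sum>l=1..k. nn (2*l-1) + nn (2*l)) = (\<Sum>i=1..2*k. (nn i :: nat))"
proof (induction k)
  case 0
  then show ?case by simp
next
  case (Suc k)
  have "(\<Sum>i=1..2*Suc k. nn i) = (\<Sum>i=1..2*k. nn i) + nn (2*k+1) + nn (2*k+2)"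
    by (simp add: sum.cl_ivl_Suc)
  then show ?case using Suc by (simp add: sum.cl_ivl_Suc)
qed

lemma block_adj:
  fixes a b W :: nat
  assumes "W > 0" "\<bar>real a - real b\<bar> \<le> real W"
  shows "b div W = a div W \<or> b div W = Suc (a div W) \<or> a div W = Suc (b div W)"
proof -
  have "a \<le> b + W" "b \<le> a + W" using assms(2) by linarith+
  then have "a div W \<le> (b + W) div W" "b div W \<le> (a+W) div W" by (auto intro: div_le_mono)
  then have "a div W \<le> b div W + 1" "b div W \<le> a div W + 1" using assms(1) by auto
  then show ?thesis by linarith
qed



theorem lemma8p1:
  fixes \<Delta> k :: nat and \<xi> :: real
  assumes "\<xi> > 0"
  shows "\<exists>lam>0. \<exists>\<beta>>0. \<exists>n0::nat.
    \<forall>(V :: nat set) (E :: nat set set) (nn :: nat \<Rightarrow> nat) (i1 :: nat) (i2 :: nat).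
      simple_graph V E \<and> bipartite V E \<and> card V \<ge> n0 \<and>
      bandwidth_le V E (\<beta> * real (card V)) \<and> max_degree_le V E \<Delta> \<and>
      (\<Sum>i = 1..2 * k. nn i) = card V \<and>
      (\<forall>i\<in>{1..2 * k}. real (nn i) > real (card V) / (3 * real k)) \<and>
      (\<forall>i\<in>{1..k}. \<bar>real (nn (2 * i - 1)) - real (nn (2 * i))\<bar> \<le> lam * real (card V)) \<and>
      i1 \<in> {1..k} \<and> i2 \<in> {1..k} \<and> i1 \<noteq> i2
      \<longrightarrow> (\<exists>S f. S \<subseteq> V \<and> graph_hom V E (2 * k) (cycle_chord_edges k i1 i2) f \<and>
             real (card S) \<le> \<xi> * real (card V) \<and>
             (\<forall>i\<in>{1..2 * k}. real (card {v\<in>V. f v = i}) \<le> real (nn i) + \<xi> * real (card V)) \<and>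
             (\<forall>u v. {u, v} \<in> E \<and> \<not> (u \<in> S \<and> v \<in> S) \<longrightarrow>
                (\<exists>i\<in>{1..k}. {f u, f v} = {2 * i - 1, 2 * i})))"
proof -
  define K where "K = (2*k)^4"
  define M where "M = K + 1"
  define \<beta> where "\<beta> = \<xi> / (8 * (2 * real k + 2) * real M)"
  define n0 where "n0 = nat \<lceil>2 / \<beta>\<rceil> + 1"
  have Mpos: "M > 0" unfolding M_def by simp
  have bpos: "\<beta> > 0" using assms Mpos unfolding \<beta>_def by auto
  show ?thesis
    apply (rule exI[of _ \<xi>], rule conjI[OF assms], rule exI[of _ \<beta>], rule conjI[OF bpos],
        rule exI[of _ n0], intro allI impI)
  subgoal premises H for V E nn i1 i2
  proof -
    define n where "n = card V"
    from H have sg: "simple_graph V E" and bip: "bipartite V E" and n0le: "n0 \<le> n"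
      and bw: "bandwidth_le V E (\<beta> * real n)" and sumnn: "(\<Sum>i = 1..2 * k. nn i) = n"
      and bal: "\<forall>i\<in>{1..k}. \<bar>real (nn (2 * i - 1)) - real (nn (2 * i))\<bar> \<le> \<xi> * real n"
      and i1: "i1 \<in> {1..k}" and i2: "i2 \<in> {1..k}" and ne: "i1 \<noteq> i2"
      unfolding n_def by blast+
    have k1: "k \<ge> 1" using i1 by auto
    have finV: "finite V" using sg unfolding simple_graph_def by blast
    obtain A B where AB: "A \<union> B = V" "A \<inter> B = {}" "\<forall>u v. {u,v} \<in> E \<longrightarrow> (u \<in> A \<longleftrightarrow> v \<in> B)"
      using bip unfolding bipartite_def by blast
    obtain \<phi> where phib: "bij_betw \<phi> V {1..n}"
      and phie: "\<forall>u v. {u,v} \<in> E \<longrightarrow> \<bar>real (\<phi> u) - real (\<phi> v)\<bar> \<le> \<beta> * real n"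
      using bw unfolding bandwidth_le_def n_def by blast
    have inj: "inj_on \<phi> V" using phib bij_betw_def by blast
    have phir: "\<And>v. v \<in> V \<Longrightarrow> 1 \<le> \<phi> v \<and> \<phi> v \<le> n" using phib unfolding bij_betw_def by auto
    have edgeV: "\<And>u v. {u,v} \<in> E \<Longrightarrow> u \<in> V \<and> v \<in> V \<and> u \<noteq> v"
    proof -
      fix u v assume "{u,v} \<in> E"
      then obtain a b where "{u,v} = {a,b}" "a \<noteq> b" "a \<in> V" "b \<in> V"
        using sg unfolding simple_graph_def by blast
      then show "u \<in> V \<and> v \<in> V \<and> u \<noteq> v" by (metis doubleton_eq_iff)
    qed
    have sideAB: "\<And>u v. {u,v} \<in> E \<Longrightarrow> (u \<in> A \<longleftrightarrow> v \<notin> A)"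
      using AB edgeV by blast
    have nbig: "real n \<ge> 2 / \<beta>"
    proof -
      have "2 / \<beta> \<le> real (nat \<lceil>2 / \<beta>\<rceil>)" by linarith
      also have "\<dots> \<le> real n" using n0le unfolding n0_def by linarith
      finally show ?thesis .
    qed
    have bn2: "\<beta> * real n \<ge> 2" using nbig bpos by (simp add: field_simps)
    define W where "W = nat \<lceil>\<beta> * real n\<rceil> + 1"
    have Wpos: "W > 0" unfolding W_def by simp
    have W1: "\<beta> * real n \<le> real W" unfolding W_def by linarith
    have W2: "real W \<le> 2 * \<beta> * real n" unfolding W_def using bn2 by linarith
    define L where "L = W * M"
    have Lpos: "L > 0" using Wpos Mpos unfolding L_def by simp
    have L2: "real L \<le> 2 * real M * \<beta> * real n" unfolding L_def using W2 Mpos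
      by (simp add: mult.commute mult.left_commute)
    have keyL: "(2 * real k + 2) * real L \<le> \<xi> * real n / 4"
    proof -
      have "(2 * real k + 2) * real L \<le> (2 * real k + 2) * (2 * real M * \<beta> * real n)"
        using L2 by (intro mult_left_mono) auto
      also have "\<dots> = \<xi> * real n / 4" 
      proof -
        have d: "(2 * real k + 2) * real M > 0" using Mpos by auto
        have e: "(2 * real k + 2) * real M * \<beta> = \<xi> / 8"

        proof -
          have aux: "\<And>x y::real. x > 0 \<Longrightarrow> x * (y / (8 * x)) = y / 8" by (simp add: field_simps)
          have "\<beta> = \<xi> / (8 * ((2 * real k + 2) * real M))" unfolding \<beta>_def by (simp add: mult.assoc)
          then show ?thesis using aux[OF d] by simp
        qed
        have "(2 * real k + 2) * (2 * real M * \<beta> * real n) = ((2 * real k + 2) * real M * \<beta>) * (2 * real n)"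
          by (simp add: algebra_simps)
        then show ?thesis unfolding e by simp
      qed
      finally show ?thesis .
    qed
    define C where "C i = (\<Sum>l=1..i. nn (2*l-1) + nn (2*l))" for i
    have Ck: "C k = n" unfolding C_def using sum_pairs[where k=k and nn=nn] sumnn by simp
    have Csuc: "\<And>i. 1 \<le> i \<Longrightarrow> C i = C (i-1) + (nn (2*i-1) + nn (2*i))"
    proof -
      fix i :: nat assume "1 \<le> i"
      then obtain j where "i = Suc j" by (cases i) auto
      then show "C i = C (i-1) + (nn (2*i-1) + nn (2*i))" unfolding C_def by (simp add: sum.cl_ivl_Suc)
    qed
    have C0: "C 0 = 0" unfolding C_def by simp
    define p where "p j = (LEAST i. k \<le> i \<or> j * L < C i)" for j
    have p_pred: "\<And>j. k \<le> p j \<or> j * L < C (p j)" unfolding p_def by (rule LeastI[of _ k]) simp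
    have p_le: "\<And>j. p j \<le> k" unfolding p_def by (rule Least_le) simp
    have p_ge: "\<And>j. 1 \<le> p j"
    proof (rule ccontr)
      fix j assume "\<not> 1 \<le> p j"
      then have "p j = 0" by simp
      then show False using p_pred[of j] k1 C0 by auto
    qed
    have p_lo: "\<And>j. C (p j - 1) \<le> j * L"
    proof -
      fix j
      have "p j - 1 < p j" using p_ge[of j] by simp
      then have "\<not> (k \<le> p j - 1 \<or> j * L < C (p j - 1))" unfolding p_def by (rule not_less_Least)
      then show "C (p j - 1) \<le> j * L" by simp
    qed
    have p_hi: "\<And>j. p j < k \<Longrightarrow> j * L < C (p j)" using p_pred by (meson not_le)
    have p_mono: "\<And>j j'. j \<le> j' \<Longrightarrow> p j \<le> p j'"
    proof -
      fix j j' :: nat assume "j \<le> j'"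
      then have "j * L \<le> j' * L" by simp
      then have "k \<le> p j' \<or> j * L < C (p j')" using p_pred[of j'] by linarith
      then show "p j \<le> p j'" unfolding p_def by (rule Least_le)
    qed
    define sb where "sb v = \<phi> v div L" for v
    define blk where "blk v = \<phi> v div W" for v
    have sb_blk: "\<And>v. sb v = blk v div M" unfolding sb_def blk_def L_def by (simp add: div_mult2_eq)
    define Vs where "Vs i = {v\<in>V. p (sb v) = i}" for i
    have finVs: "\<And>i. finite (Vs i)" unfolding Vs_def using finV by simp
    have blockcard: "\<And>j. card {v\<in>V. sb v = j} \<le> L"
    proof -
      fix j
      have "\<phi> ` {v\<in>V. sb v = j} \<subseteq> {j*L..<j*L+L}"
      proof
        fix x assume "x \<in> \<phi> ` {v\<in>V. sb v = j}"
        then obtain v where v: "x = \<phi> v" "\<phi> v div L = j" unfolding sb_def by auto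
        have "j * L \<le> \<phi> v" using v(2) div_times_less_eq_dividend[of "\<phi> v" L] by (simp add: mult.commute)
        moreover have "\<phi> v < j*L + L" using v(2) Lpos
          by (metis div_mult_mod_eq mod_less_divisor add_less_mono1 add.commute mult.commute nat_add_left_cancel_less)
        ultimately show "x \<in> {j*L..<j*L+L}" using v by simp
      qed
      then have "card {v\<in>V. sb v = j} \<le> j*L+L - j*L"
        using card_interval_inj[OF inj_on_subset[OF inj]] by (metis (no_types, lifting) mem_Collect_eq subsetI)
      then show "card {v\<in>V. sb v = j} \<le> L" by simp
    qed
    have Vscard: "\<And>i. i \<in> {1..k} \<Longrightarrow> card (Vs i) \<le> nn (2*i-1) + nn (2*i) + L"
    proof -
      fix i assume i: "i \<in> {1..k}"
      have "\<phi> ` Vs i \<subseteq> {C (i-1)..<C i + L}"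
      proof
        fix x assume "x \<in> \<phi> ` Vs i"
        then obtain v where v: "x = \<phi> v" "v \<in> V" "p (sb v) = i" unfolding Vs_def by auto
        have a: "sb v * L \<le> \<phi> v" unfolding sb_def by (simp add: div_times_less_eq_dividend)
        have b: "\<phi> v < sb v * L + L" unfolding sb_def using Lpos
          by (metis div_mult_mod_eq mod_less_divisor add_less_mono1 add.commute mult.commute nat_add_left_cancel_less)
        have "C (i-1) \<le> \<phi> v" using p_lo[of "sb v"] v(3) a by simp
        moreover have "\<phi> v < C i + L"
        proof (cases "i < k")
          case True
          then show ?thesis using p_hi[of "sb v"] v(3) b by simp
        next
          case False
          then have "i = k" using i by simp
          then show ?thesis using phir[OF v(2)] Ck Lpos by simp
        qed
        ultimately show "x \<in> {C (i-1)..<C i + L}" using v by simp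
      qed
      then have "card (Vs i) \<le> C i + L - C (i-1)"
        using card_interval_inj[OF inj_on_subset[OF inj]] unfolding Vs_def
        by (metis (no_types, lifting) mem_Collect_eq subsetI)
      then show "card (Vs i) \<le> nn (2*i-1) + nn (2*i) + L" using Csuc[of i] i by simp
    qed
    define hh where "hh i t = (\<Sum>v\<in>Vs i. if (v \<in> A \<longleftrightarrow> sb v < t) then (1::int) else -1)" for i t
    have hstep: "\<And>i t. \<bar>hh i (Suc t) - hh i t\<bar> \<le> 2 * int L"
    proof -
      fix i t
      define d where "d t' v = (if (v \<in> A \<longleftrightarrow> sb v < t') then (1::int) else -1)" for t' v
      have "hh i (Suc t) - hh i t = (\<Sum>v\<in>Vs i. d (Suc t) v - d t v)"
        unfolding hh_def d_def by (simp add: sum_subtractf)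
      also have "\<bar>\<dots>\<bar> \<le> (\<Sum>v\<in>Vs i. \<bar>d (Suc t) v - d t v\<bar>)" by (rule sum_abs)
      also have "\<dots> \<le> (\<Sum>v\<in>Vs i. if sb v = t then 2 else 0)"
        by (rule sum_mono) (auto simp: d_def less_Suc_eq)
      also have "\<dots> = (\<Sum>v\<in>{v\<in>Vs i. sb v = t}. 2)" using sum.inter_filter[OF finVs[of i], of "\<lambda>_. (2::int)" "\<lambda>v. sb v = t"] by simp
      also have "\<dots> = 2 * int (card {v\<in>Vs i. sb v = t})" by simp
      also have "\<dots> \<le> 2 * int L"
      proof -
        have "card {v\<in>Vs i. sb v = t} \<le> card {v\<in>V. sb v = t}"
          by (rule card_mono) (auto simp: finV Vs_def)
        then show ?thesis using blockcard[of t] by simp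
      qed
      finally show "\<bar>hh i (Suc t) - hh i t\<bar> \<le> 2 * int L" .
    qed
    have hend: "\<And>i. hh i (n+1) = - hh i 0"
    proof -
      fix i
      have "\<And>v. v \<in> Vs i \<Longrightarrow> sb v < n + 1"
      proof -
        fix v assume "v \<in> Vs i"
        then have "\<phi> v \<le> n" using phir unfolding Vs_def by auto
        moreover have "sb v \<le> \<phi> v" unfolding sb_def by simp
        ultimately show "sb v < n + 1" by simp
      qed
      then have "hh i (n+1) = (\<Sum>v\<in>Vs i. if v \<in> A then (1::int) else -1)" unfolding hh_def
        by (intro sum.cong) auto
      also have "\<dots> = - (\<Sum>v\<in>Vs i. if v \<in> A then (-1::int) else 1)"
        by (simp add: sum_negf[symmetric] if_distrib cong: if_cong)
      also have "(\<Sum>v\<in>Vs i. if v \<in> A then (-1::int) else 1) = hh i 0" unfolding hh_def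
        by (intro sum.cong) auto
      finally show "hh i (n+1) = - hh i 0" .
    qed
    have "\<forall>i. \<exists>ti. \<bar>hh i ti\<bar> \<le> 2 * int L"
    proof
      fix i
      show "\<exists>ti. \<bar>hh i ti\<bar> \<le> 2 * int L" using ivt_sym[of "n+1" "hh i" "2 * int L"] hstep hend by auto
    qed
    then obtain t where t: "\<And>i. \<bar>hh i (t i)\<bar> \<le> 2 * int L" by metis
    define F where "F = cycle_chord_edges k i1 i2"
    define R where "R = Rel k F"
    define \<tau> where "\<tau> j = pst (p j) (j < t (p j))" for j
    have pk: "\<And>j. p j \<in> {1..k}" using p_ge p_le by auto
    have \<tau>valid: "\<And>j. validst k F (\<tau> j)" unfolding \<tau>_def F_def using pst_valid pk by blast
    define wk where "wk s s' = (SOME f. f 0 = s \<and> f K = s' \<and> (\<forall>r<K. (f r, f (Suc r)) \<in> R))" for s s'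
    have wk: "\<And>j j'. wk (\<tau> j) (\<tau> j') 0 = \<tau> j \<and> wk (\<tau> j) (\<tau> j') K = \<tau> j'
                 \<and> (\<forall>r<K. (wk (\<tau> j) (\<tau> j') r, wk (\<tau> j) (\<tau> j') (Suc r)) \<in> R)"
    proof -
      fix j j'
      have "\<exists>f. f 0 = \<tau> j \<and> f K = \<tau> j' \<and> (\<forall>r<K. (f r, f (Suc r)) \<in> R)"
        unfolding \<tau>_def R_def K_def F_def using walk_exists[OF i1 i2 ne pk pk] by blast
      then show "?thesis j j'" unfolding wk_def by (rule someI_ex)
    qed
    define chg where "chg j \<longleftrightarrow> 0 < j \<and> \<tau> (j-1) \<noteq> \<tau> j" for j
    define \<sigma> where "\<sigma> b = (if chg (b div M) then wk (\<tau> (b div M - 1)) (\<tau> (b div M)) (b mod M) else \<tau> (b div M))" for b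
    have R_valid: "\<And>s s'. (s,s') \<in> R \<Longrightarrow> validst k F s \<and> validst k F s'" unfolding R_def Rel_def by auto
    have \<sigma>valid: "\<And>b. validst k F (\<sigma> b)"
    proof -
      fix b
      show "validst k F (\<sigma> b)"
      proof (cases "chg (b div M)")
        case True
        have "b mod M \<le> K" using Mpos unfolding M_def by (simp add: less_Suc_eq_le)
        then have "b mod M < K \<or> b mod M = K" by auto
        then show ?thesis
        proof
          assume "b mod M < K"
          then have "(\<sigma> b, wk (\<tau> (b div M - 1)) (\<tau> (b div M)) (Suc (b mod M))) \<in> R"
            using True wk[of "b div M - 1" "b div M"] unfolding \<sigma>_def by simp
          then show ?thesis using R_valid by blast
        next
          assume "b mod M = K"
          then show ?thesis using True wk[of "b div M - 1" "b div M"] \<tau>valid unfolding \<sigma>_def by simp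
        qed
      next
        case False
        then show ?thesis using \<tau>valid unfolding \<sigma>_def by simp
      qed
    qed
    have \<sigma>last: "\<And>b. b mod M = K \<Longrightarrow> \<sigma> b = \<tau> (b div M)"
      unfolding \<sigma>_def using wk by presburger
    have \<sigma>first: "\<And>b. b mod M = 0 \<Longrightarrow> 0 < b div M \<Longrightarrow> \<sigma> b = \<tau> (b div M - 1)"
    proof -
      fix b assume b: "b mod M = 0" "0 < b div M"
      show "\<sigma> b = \<tau> (b div M - 1)"
      proof (cases "chg (b div M)")
        case True
        then show ?thesis unfolding \<sigma>_def using b wk[of "b div M - 1" "b div M"] by simp
      next
        case False
        then show ?thesis unfolding \<sigma>_def using b unfolding chg_def by simp
      qed
    qed
    have \<sigma>adj: "\<And>b. (\<sigma> b, \<sigma> (Suc b)) \<in> R"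
    proof -
      fix b
      show "(\<sigma> b, \<sigma> (Suc b)) \<in> R"
      proof (cases "Suc (b mod M) = M")
        case True
        then have e1: "b mod M = K" unfolding M_def by simp
        have e2: "Suc b mod M = 0" "Suc b div M = Suc (b div M)" using True by (simp_all add: mod_Suc div_Suc)
        have "\<sigma> b = \<tau> (b div M)" using \<sigma>last[OF e1] .
        moreover have "\<sigma> (Suc b) = \<tau> (b div M)" using \<sigma>first[of "Suc b"] e2 by simp
        moreover have "(\<tau> (b div M), \<tau> (b div M)) \<in> R" unfolding R_def by (rule Rel_refl[OF \<tau>valid])
        ultimately show ?thesis by simp
      next
        case False
        then have e2: "Suc b mod M = Suc (b mod M)" "Suc b div M = b div M" by (simp_all add: mod_Suc div_Suc)
        have lt: "b mod M < K" using False mod_less_divisor[OF Mpos, of b] unfolding M_def by linarith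
        show ?thesis
        proof (cases "chg (b div M)")
          case True
          then show ?thesis unfolding \<sigma>_def using e2 wk[of "b div M - 1" "b div M"] lt by simp
        next
          case False
          have "(\<tau> (b div M), \<tau> (b div M)) \<in> R" unfolding R_def by (rule Rel_refl[OF \<tau>valid])
          then show ?thesis unfolding \<sigma>_def using e2 False by simp
        qed
      qed
    qed
    have Rsym: "\<And>s s'. (s,s') \<in> R \<Longrightarrow> (s',s) \<in> R" using Rel_sym unfolding R_def by (meson symD)
    have \<sigma>near: "\<And>b b'. b' = b \<or> b' = Suc b \<or> b = Suc b' \<Longrightarrow> (\<sigma> b, \<sigma> b') \<in> R"
    proof -
      fix b b' :: nat assume "b' = b \<or> b' = Suc b \<or> b = Suc b'"
      moreover have "(\<sigma> b, \<sigma> b) \<in> R" unfolding R_def by (rule Rel_refl[OF \<sigma>valid])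
      ultimately show "(\<sigma> b, \<sigma> b') \<in> R" using \<sigma>adj[of b] \<sigma>adj[of b'] Rsym[of "\<sigma> b'" "\<sigma> b"] by auto
    qed
    have \<sigma>good: "\<And>b b'. \<not> chg (b div M) \<Longrightarrow> b' = b \<or> b' = Suc b \<or> b = Suc b' \<Longrightarrow>
        \<sigma> b' = \<tau> (b div M) \<and> \<sigma> b = \<tau> (b div M)"
    proof -
      fix b b' :: nat assume nc: "\<not> chg (b div M)" and bb: "b' = b \<or> b' = Suc b \<or> b = Suc b'"
      have sb: "\<sigma> b = \<tau> (b div M)" unfolding \<sigma>_def using nc by simp
      have "\<sigma> b' = \<tau> (b div M)"
      proof -
        consider "b' = b" | "b' = Suc b" | "b = Suc b'" using bb by blast
        then show ?thesis
        proof cases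
          case 1 then show ?thesis using sb by simp
        next
          case 2
          show ?thesis
          proof (cases "Suc (b mod M) = M")
            case True
            then have "b' mod M = 0" "b' div M = Suc (b div M)" using 2 by (simp_all add: mod_Suc div_Suc)
            then show ?thesis using \<sigma>first[of b'] by simp
          next
            case False
            then have "b' div M = b div M" using 2 by (simp add: div_Suc mod_Suc)
            then show ?thesis unfolding \<sigma>_def using nc by simp
          qed
        next
          case 3
          show ?thesis
          proof (cases "Suc (b' mod M) = M")
            case True
            then have e: "b mod M = 0" "b div M = Suc (b' div M)" using 3 by (simp_all add: mod_Suc div_Suc)
            then have "b' mod M = K" using True unfolding M_def by simp
            then have "\<sigma> b' = \<tau> (b' div M)" by (rule \<sigma>last)
            moreover have "\<tau> (b div M - 1) = \<tau> (b div M)" using nc e unfolding chg_def by simp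
            ultimately show ?thesis using e by simp
          next
            case False
            then have "b div M = b' div M" using 3 by (simp add: div_Suc mod_Suc)
            then show ?thesis unfolding \<sigma>_def using nc by simp
          qed
        qed
      qed
      then show "\<sigma> b' = \<tau> (b div M) \<and> \<sigma> b = \<tau> (b div M)" using sb by simp
    qed
    define f where "f v = (if v \<in> A then fst (\<sigma> (blk v)) else snd (\<sigma> (blk v)))" for v
    define S where "S = {v\<in>V. chg (sb v)}"
    have blkadj: "\<And>u v. {u,v} \<in> E \<Longrightarrow> blk v = blk u \<or> blk v = Suc (blk u) \<or> blk u = Suc (blk v)"
    proof -
      fix u v assume "{u,v} \<in> E"
      then have "\<bar>real (\<phi> u) - real (\<phi> v)\<bar> \<le> real W" using phie W1 by fastforce
      then show "blk v = blk u \<or> blk v = Suc (blk u) \<or> blk u = Suc (blk v)"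
        unfolding blk_def using block_adj[OF Wpos] by blast
    qed
    have hom: "graph_hom V E (2 * k) (cycle_chord_edges k i1 i2) f"
      unfolding graph_hom_def
    proof (intro conjI allI impI ballI)
      fix v assume "v \<in> V"
      show "f v \<in> {1..2*k}" using \<sigma>valid[of "blk v"] unfolding f_def validst_def by auto
    next
      fix u v assume e: "{u,v} \<in> E"
      have r: "(\<sigma> (blk u), \<sigma> (blk v)) \<in> R" by (rule \<sigma>near[OF blkadj[OF e]])
      then have r': "(\<sigma> (blk v), \<sigma> (blk u)) \<in> R" by (rule Rsym)
      have "{f u, f v} \<in> F"
      proof (cases "u \<in> A")
        case True
        then have "v \<notin> A" using sideAB[OF e] by simp
        then show ?thesis using True r unfolding f_def R_def Rel_def by auto
      next
        case False
        then have "v \<in> A" using sideAB[OF e] by simp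
        then show ?thesis using False r' unfolding f_def R_def Rel_def by (auto simp: insert_commute)
      qed
      then show "{f u, f v} \<in> cycle_chord_edges k i1 i2" unfolding F_def .
    qed
    have notS: "\<And>u. u \<in> V \<Longrightarrow> u \<notin> S \<Longrightarrow> \<not> chg (blk u div M)"
      unfolding S_def using sb_blk by auto
    have pstpair: "\<And>q c. {fst (pst q c), snd (pst q c)} = {2*q-1, 2*q}"
      unfolding pst_def by (auto simp: insert_commute)
    have nonS1: "\<And>u v. {u,v} \<in> E \<Longrightarrow> u \<notin> S \<Longrightarrow> \<exists>i\<in>{1..k}. {f u, f v} = {2*i-1, 2*i}"
    proof -
      fix u v assume e: "{u,v} \<in> E" and uS: "u \<notin> S"
      have uV: "u \<in> V" using edgeV[OF e] by simp
      have g: "\<sigma> (blk v) = \<tau> (blk u div M) \<and> \<sigma> (blk u) = \<tau> (blk u div M)"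
        by (rule \<sigma>good[OF notS[OF uV uS] blkadj[OF e]])
      define q where "q = p (blk u div M)"
      define c where "c = (blk u div M < t q)"
      have tq: "\<tau> (blk u div M) = pst q c" unfolding \<tau>_def q_def c_def by simp
      have "{f u, f v} = {fst (pst q c), snd (pst q c)}"
      proof (cases "u \<in> A")
        case True
        then have "v \<notin> A" using sideAB[OF e] by simp
        then show ?thesis using True g tq unfolding f_def by simp
      next
        case False
        then have "v \<in> A" using sideAB[OF e] by simp
        then show ?thesis using False g tq unfolding f_def by (simp add: insert_commute)
      qed
      then have "{f u, f v} = {2*q-1, 2*q}" using pstpair by simp
      moreover have "q \<in> {1..k}" unfolding q_def using pk by simp
      ultimately show "\<exists>i\<in>{1..k}. {f u, f v} = {2*i-1, 2*i}" by blast
    qed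
    have nonS: "\<forall>u v. {u, v} \<in> E \<and> \<not> (u \<in> S \<and> v \<in> S) \<longrightarrow>
                (\<exists>i\<in>{1..k}. {f u, f v} = {2 * i - 1, 2 * i})"
    proof (intro allI impI)
      fix u v assume a: "{u, v} \<in> E \<and> \<not> (u \<in> S \<and> v \<in> S)"
      show "\<exists>i\<in>{1..k}. {f u, f v} = {2 * i - 1, 2 * i}"
      proof (cases "u \<in> S")
        case False
        then show ?thesis using nonS1 a by blast
      next
        case True
        then have "v \<notin> S" using a by blast
        moreover have "{v,u} \<in> E" using a by (simp add: insert_commute)
        ultimately show ?thesis using nonS1[of v u] by (simp add: insert_commute)
      qed
    qed
    have lab: "\<And>v. v \<in> V \<Longrightarrow> v \<notin> S \<Longrightarrow> f v = (if v \<in> A then fst (\<tau> (sb v)) else snd (\<tau> (sb v)))"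
      using \<sigma>good notS sb_blk unfolding f_def by metis
    define D where "D = {j. 0 < j \<and> p (j-1) \<noteq> p j}"
    have injD: "inj_on p D"
    proof (rule inj_onI)
      have lt: "p j1 < p j2" if "j1 \<in> D" "j2 \<in> D" "j1 < j2" for j1 j2
      proof -
        have "p j1 \<le> p (j2 - 1)" using that by (intro p_mono) simp
        moreover have "p (j2-1) \<le> p j2" by (intro p_mono) simp
        moreover have "p (j2-1) \<noteq> p j2" using that unfolding D_def by simp
        ultimately show ?thesis by simp
      qed
      fix j1 j2 assume "j1 \<in> D" "j2 \<in> D" "p j1 = p j2"
      then show "j1 = j2" using lt[of j1 j2] lt[of j2 j1] by (metis less_irrefl nat_neq_iff)
    qed
    have pD: "p ` D \<subseteq> {1..k}" using pk by auto
    have finD: "finite D" using finite_imageD[OF finite_subset[OF pD] injD] by simp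
    have cardD: "card D \<le> k" using card_inj_on_le[OF injD pD] by simp
    have Jsub: "{j. chg j} \<subseteq> D \<union> t ` {1..k}"
    proof
      fix j assume "j \<in> {j. chg j}"
      then have c: "0 < j" "\<tau> (j-1) \<noteq> \<tau> j" unfolding chg_def by auto
      show "j \<in> D \<union> t ` {1..k}"
      proof (cases "p (j-1) = p j")
        case True
        have "(j - 1 < t (p j)) \<noteq> (j < t (p j))"
        proof
          assume eq: "(j - 1 < t (p j)) = (j < t (p j))"
          have "\<tau> (j-1) = \<tau> j" unfolding \<tau>_def using True eq by simp
          then show False using c(2) by simp
        qed
        then have "j = t (p j)" using c(1) by auto
        then show ?thesis using pk by blast
      next
        case False
        then show ?thesis using c(1) unfolding D_def by blast
      qed
    qed
    have finJ: "finite {j. chg j}" using finite_subset[OF Jsub] finD by blast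
    have cardJ: "card {j. chg j} \<le> 2 * k"
    proof -
      have "card {j. chg j} \<le> card (D \<union> t ` {1..k})" using Jsub finD by (intro card_mono) auto
      also have "\<dots> \<le> card D + card (t ` {1..k})" by (rule card_Un_le)
      also have "card (t ` {1..k}) \<le> k" using card_image_le[of "{1..k}" t] by simp
      finally show ?thesis using cardD by simp
    qed
    have Ssub: "S \<subseteq> V" unfolding S_def by auto
    have cardS: "card S \<le> 2 * k * L"
    proof -
      have "S = (\<Union>j\<in>{j. chg j}. {v\<in>V. sb v = j})" unfolding S_def by auto
      then have "card S \<le> (\<Sum>j\<in>{j. chg j}. card {v\<in>V. sb v = j})" using card_UN_le[OF finJ] by simp
      also have "\<dots> \<le> (\<Sum>j\<in>{j. chg j}. L)" by (rule sum_mono) (rule blockcard)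
      also have "\<dots> = card {j. chg j} * L" by simp
      also have "\<dots> \<le> 2 * k * L" using cardJ by simp
      finally show ?thesis .
    qed
    have counts: "\<forall>l\<in>{1..2 * k}. real (card {v\<in>V. f v = l}) \<le> real (nn l) + \<xi> * real n"
    proof
      fix l assume l: "l \<in> {1..2*k}"
      define i where "i = (l + 1) div 2"
      have i: "i \<in> {1..k}" using l unfolding i_def by auto
      have li: "l = 2*i-1 \<or> l = 2*i" unfolding i_def by presburger
      define X where "X = {v\<in>Vs i. (v \<in> A \<longleftrightarrow> sb v < t i)}"
      define Y where "Y = {v\<in>Vs i. \<not> (v \<in> A \<longleftrightarrow> sb v < t i)}"
      have hX: "hh i (t i) = int (card X) - int (card Y)"
        unfolding hh_def X_def Y_def by (rule sum_if_pm[OF finVs])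
      have XY: "card X + card Y = card (Vs i)"
      proof -
        have "Vs i = X \<union> Y" "X \<inter> Y = {}" unfolding X_def Y_def by auto
        then show ?thesis using card_Un_disjoint[of X Y] finVs[of i] by (metis finite_Un)
      qed
      have finXY: "finite X" "finite Y" using finVs[of i] unfolding X_def Y_def by auto
      have sub: "{v\<in>V. f v = l} \<subseteq> S \<union> (if l = 2*i-1 then X else Y)"
      proof
        fix v assume v: "v \<in> {v\<in>V. f v = l}"
        show "v \<in> S \<union> (if l = 2*i-1 then X else Y)"
        proof (cases "v \<in> S")
          case True then show ?thesis by simp
        next
          case False
          define q where "q = p (sb v)"
          define c where "c = (sb v < t q)"
          have q1: "q \<ge> 1" unfolding q_def using pk by auto
          have fv: "f v = (if (v \<in> A \<longleftrightarrow> c) then 2*q-1 else 2*q)"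
            using lab[of v] v False unfolding \<tau>_def q_def[symmetric] c_def[symmetric] pst_def by auto
          have qi: "q = i"
          proof -
            have "l = 2*q-1 \<or> l = 2*q" using fv v by (cases "v \<in> A \<longleftrightarrow> c") auto
            then show ?thesis unfolding i_def using q1 by auto
          qed
          have vVs: "v \<in> Vs i" using v qi unfolding Vs_def q_def by simp
          have "(l = 2*i-1) \<longleftrightarrow> (v \<in> A \<longleftrightarrow> c)" using fv v qi q1 by (cases "v \<in> A \<longleftrightarrow> c") auto
          then show ?thesis using vVs unfolding X_def Y_def c_def qi by auto
        qed
      qed
      have cardf: "card {v\<in>V. f v = l} \<le> card S + card (if l = 2*i-1 then X else Y)"
      proof -
        have "card {v\<in>V. f v = l} \<le> card (S \<union> (if l = 2*i-1 then X else Y))"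
          using sub finXY finite_subset[OF Ssub finV] by (intro card_mono) auto
        also have "\<dots> \<le> card S + card (if l = 2*i-1 then X else Y)" by (rule card_Un_le)
        finally show ?thesis .
      qed
      have hb: "\<bar>real (card X) - real (card Y)\<bar> \<le> 2 * real L"
      proof -
        have "\<bar>int (card X) - int (card Y)\<bar> \<le> 2 * int L" using t[of i] hX by simp
        then show ?thesis by linarith
      qed
      have XY': "real (card X) + real (card Y) \<le> real (nn (2*i-1)) + real (nn (2*i)) + real L"
        using XY Vscard[OF i] by (metis of_nat_add of_nat_le_iff)
      have bi: "\<bar>real (nn (2 * i - 1)) - real (nn (2 * i))\<bar> \<le> \<xi> * real n" using bal i by blast
      have one: "real (card (if l = 2*i-1 then X else Y)) \<le> real (nn l) + \<xi> * real n / 2 + 3 / 2 * real L"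
        using li hb XY' bi by (cases "l = 2*i-1") (auto simp: abs_le_iff)
      have S2: "real (card S) \<le> 2 * real k * real L" using cardS by (metis of_nat_le_iff of_nat_mult of_nat_numeral)
      have "real (card {v\<in>V. f v = l}) \<le> real (card S) + real (card (if l = 2*i-1 then X else Y))"
        using cardf by linarith
      also have "\<dots> \<le> real (nn l) + \<xi> * real n"
      proof -
        have "real L \<ge> 0" by simp
        then show ?thesis using one S2 keyL by (simp only: algebra_simps)
      qed
      finally show "real (card {v\<in>V. f v = l}) \<le> real (nn l) + \<xi> * real n" .
    qed
    have Sbound: "real (card S) \<le> \<xi> * real n"
    proof -
      have "real (card S) \<le> 2 * real k * real L" using cardS by (metis of_nat_le_iff of_nat_mult of_nat_numeral)
      also have "\<dots> \<le> (2 * real k + 2) * real L" by (simp add: algebra_simps)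
      also have "\<dots> \<le> \<xi> * real n"
      proof -
        have "(2 * real k + 2) * real L \<ge> 0" by simp
        then show ?thesis using keyL by linarith
      qed
      finally show ?thesis .
    qed
    show ?thesis unfolding n_def[symmetric] using Ssub hom Sbound counts nonS by blast
  qed
  done
qed

end
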